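(* Let $p$ be a prime, $R$ an $F$-pure ring of characteristic $p$, and $f\in R$ a non-zero non-unit. Let $d\ge1$ be an integer and $\alpha\in[0,1]$ with $(p^d-1)\alpha\in\mathbb{N}$. If the inclusion $R\cdot f^{\langle\alpha\rangle_d}\subseteq R^{1/p^d}$ splits over $R$, then the inclusion $R\cdot f^{\langle\alpha\rangle_{ed}}\subseteq R^{1/p^{ed}}$ splits over $R$ for every integer $e\ge1$.
   Context: A ring $R$ of characteristic $p$ is $F$-pure if $R\subseteq R^{1/p}$ splits as a map of $R$-modules. Roots and splitting. $R^{1/p^e}$ is the ring of formal $p^e$-th roots of elements of $R$, containing $R$ via $r\mapsto(r^{p^e})^{1/p^e}$. For $a\in\mathbb{N}$, $f^{a/p^e}:=(f^a)^{1/p^e}$. The inclusion $R\cdot t\subseteq R^{1/p^e}$ splits over $R$ if some $R$-linear $\theta:R^{1/p^e}\to R$ has $\theta(t)=1$. Truncations. For $\alpha\in(0,1]$ with non-terminating base $p$ expansion $\alpha=\sum_{e\ge1}a_e/p^e$ (digits $0\le a_e\le p-1$, not all eventually zero), $\langle\alpha\rangle_e:=\sum_{i=1}^e a_i/p^i\in\frac1{p^e}\mathbb{N}$. By convention $\langle0\rangle_e=0$. *)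

theory Defs
  imports Complex_Main "HOL-Computational_Algebra.Primes"
begin

text \<open>R^{1/p^e} is the ring of formal p^e-th roots t^{1/p^e} (t in R); as an R-module
it is R itself with scalar action r . t^{1/p^e} = (r^{p^e} t)^{1/p^e}.
An R-linear map R^{1/p^e} -> R is thus an additive map theta on R with
theta (r^(p^e) * t) = r * theta t.  The inclusion R . t^{1/p^e} in R^{1/p^e}
splits iff such a theta satisfies theta t = 1.\<close>

definition root_splits :: "nat \<Rightarrow> nat \<Rightarrow> 'a::comm_ring_1 \<Rightarrow> bool" where
  "root_splits p e t \<longleftrightarrow>
     (\<exists>\<theta> :: 'a \<Rightarrow> 'a.
        (\<forall>x y. \<theta> (x + y) = \<theta> x + \<theta> y) \<and>
        (\<forall>r x. \<theta> (r ^ (p ^ e) * x) = r * \<theta> x) \<and>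
        \<theta> t = 1)"

text \<open>F-pure: R in R^{1/p} splits, i.e. R . 1^{1/p} in R^{1/p} splits.\<close>
definition F_pure :: "nat \<Rightarrow> 'a::comm_ring_1 itself \<Rightarrow> bool" where
  "F_pure p _ \<longleftrightarrow> root_splits p 1 (1::'a)"

definition nonterm_expansion :: "nat \<Rightarrow> real \<Rightarrow> (nat \<Rightarrow> nat) \<Rightarrow> bool" where
  "nonterm_expansion p \<alpha> a \<longleftrightarrow>
     (\<forall>e\<ge>1. a e < p) \<and> (\<forall>N. \<exists>e>N. a e \<noteq> 0) \<and>
     (\<lambda>i. real (a (Suc i)) / real p ^ Suc i) sums \<alpha>"

text \<open>Numerator of the truncation: <alpha>_e = trunc_num p alpha e / p^e,
 with <0>_e = 0.\<close>
definition trunc_num :: "nat \<Rightarrow> real \<Rightarrow> nat \<Rightarrow> nat" where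
  "trunc_num p \<alpha> e =
     (if \<alpha> = 0 then 0
      else (let a = (SOME a. nonterm_expansion p \<alpha> a)
            in \<Sum>i\<in>{1..e}. a i * p ^ (e - i)))"

definition trunc :: "nat \<Rightarrow> real \<Rightarrow> nat \<Rightarrow> real" where
  "trunc p \<alpha> e = real (trunc_num p \<alpha> e) / real p ^ e"

end

theory Submission
  imports Defs
begin

lemma compose_split:
  fixes s t :: "'a::comm_ring_1"
  assumes "root_splits p a s" "root_splits p b t"
  shows "root_splits p (a + b) (s * t ^ (p ^ a))"
proof -
  obtain \<theta> where th: "\<forall>x y. \<theta> (x + y) = \<theta> x + \<theta> y" "\<forall>r x. \<theta> (r ^ (p ^ a) * x) = r * \<theta> x" "\<theta> s = 1"
    using assms(1) unfolding root_splits_def by blast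
  obtain \<psi> where ps: "\<forall>x y. \<psi> (x + y) = \<psi> x + \<psi> y" "\<forall>r x. \<psi> (r ^ (p ^ b) * x) = r * \<psi> x" "\<psi> t = 1"
    using assms(2) unfolding root_splits_def by blast
  show ?thesis unfolding root_splits_def
  proof (intro exI[of _ "\<psi> \<circ> \<theta>"] conjI allI)
    fix x y show "(\<psi> \<circ> \<theta>) (x + y) = (\<psi> \<circ> \<theta>) x + (\<psi> \<circ> \<theta>) y" using th ps by simp
  next
    fix r x :: 'a
    have "r ^ p ^ (a + b) = r ^ (p ^ b * p ^ a)" by (simp add: power_add mult.commute)
    also have "\<dots> = (r ^ p ^ b) ^ p ^ a" by (rule power_mult)
    finally have "r ^ p ^ (a + b) = (r ^ p ^ b) ^ p ^ a" .
    then show "(\<psi> \<circ> \<theta>) (r ^ p ^ (a + b) * x) = r * (\<psi> \<circ> \<theta>) x" using th ps by simp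
  next
    have "\<theta> (s * t ^ p ^ a) = t" using th(2,3) by (metis mult.commute mult.right_neutral)
    then show "(\<psi> \<circ> \<theta>) (s * t ^ p ^ a) = 1" using ps by simp
  qed
qed

lemma digits_sum:
  assumes "p > 0"
  shows "real (\<Sum>i\<in>{1..k}. a i * p^(k-i)) = real p^k * (\<Sum>i<k. real (a (Suc i)) / real p ^ Suc i)"
proof (induction k)
  case 0 then show ?case by simp
next
  case (Suc k)
  have "(\<Sum>i\<in>{1..Suc k}. a i * p^(Suc k-i)) = p * (\<Sum>i\<in>{1..k}. a i * p^(k-i)) + a (Suc k)"
  proof -
    have "(\<Sum>i\<in>{1..k}. a i * p^(Suc k-i)) = (\<Sum>i\<in>{1..k}. p * (a i * p^(k-i)))"
      by (rule sum.cong) (auto simp: Suc_diff_le)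
    then show ?thesis by (simp add: sum_distrib_left)
  qed
  then have "real (\<Sum>i\<in>{1..Suc k}. a i * p^(Suc k-i)) = real p * real (\<Sum>i\<in>{1..k}. a i * p^(k-i)) + real (a (Suc k))"
    by simp
  also have "\<dots> = real p ^ Suc k * (\<Sum>i<Suc k. real (a (Suc i)) / real p ^ Suc i)"
    using Suc assms by (simp add: field_simps)
  finally show ?case .
qed

lemma expansion_bounds:
  assumes E: "nonterm_expansion p \<alpha> a" and p: "p \<ge> 2"
  defines "g \<equiv> (\<lambda>i. real (a (Suc i)) / real p ^ Suc i)"
  shows "real p^k * (\<Sum>i<k. g i) < real p^k * \<alpha>"
    and "real p^k * \<alpha> \<le> real p^k * (\<Sum>i<k. g i) + 1"
proof -
  have dig: "\<And>e. e \<ge> 1 \<Longrightarrow> a e < p" and nt: "\<And>N. \<exists>e>N. a e \<noteq> 0" and sm: "g sums \<alpha>"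
    using E unfolding nonterm_expansion_def g_def by auto
  define T where "T = \<alpha> - (\<Sum>i<k. g i)"
  have Ts: "(\<lambda>i. g (i + k)) sums T" unfolding T_def by (rule sums_split_initial_segment[OF sm])
  have gnn: "\<And>i. 0 \<le> g i" unfolding g_def by simp
  obtain e where e: "e > k" "a e \<noteq> 0" using nt by blast
  define j where "j = e - Suc k"
  have j: "e = Suc (j + k)" using e unfolding j_def by simp
  have "a (Suc (j + k)) \<noteq> 0" using e j by simp
  then have "0 < g (j + k)" unfolding g_def using p by (intro divide_pos_pos) auto
  then have "0 < suminf (\<lambda>i. g (i + k))"
    using Ts gnn by (intro suminf_pos2[of _ j]) (auto simp: sums_iff)
  moreover have "T = suminf (\<lambda>i. g (i + k))" using Ts by (simp add: sums_iff)
  ultimately have Tpos: "0 < T" by simp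
  define c where "c = (real p - 1) / real p ^ Suc k"
  have geo: "(\<lambda>i. c * (1 / real p) ^ i) sums (c * (1 / (1 - 1 / real p)))"
    by (intro sums_mult geometric_sums) (use p in auto)
  have gle: "g (i + k) \<le> c * (1 / real p) ^ i" for i
  proof -
    have "a (Suc (i + k)) < p" using dig by simp
    then have "real (a (Suc (i + k))) \<le> real p - 1" by linarith
    moreover have "real p ^ Suc (i + k) = real p ^ Suc k * real p ^ i" by (simp add: power_add)
    ultimately show ?thesis unfolding g_def c_def using p
      by (auto simp: mult.assoc power_one_over intro!: divide_right_mono)
  qed
  have "T \<le> c * (1 / (1 - 1 / real p))" by (rule sums_le[OF _ Ts geo]) (rule gle)
  also have "\<dots> = 1 / real p ^ k" unfolding c_def using p by (simp add: field_simps)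
  finally have Tle: "T \<le> 1 / real p ^ k" .
  have pk: "real p ^ k > 0" using p by simp
  have "0 < real p ^ k * T" using Tpos pk by simp
  then show "real p^k * (\<Sum>i<k. g i) < real p^k * \<alpha>" unfolding T_def by (simp add: right_diff_distrib)
  have "real p ^ k * T \<le> real p ^ k * (1 / real p ^ k)" using Tle pk by (intro mult_left_mono) auto
  then have "real p ^ k * T \<le> 1" using pk p by simp
  then show "real p^k * \<alpha> \<le> real p^k * (\<Sum>i<k. g i) + 1" unfolding T_def by (simp add: right_diff_distrib)
qed

lemma expansion_exists:
  assumes a0: "0 < \<alpha>" and a1: "\<alpha> \<le> 1" and p: "p \<ge> 2"
  shows "\<exists>a. nonterm_expansion p \<alpha> a"
proof -
  define c :: "nat \<Rightarrow> int" where "c i = \<lceil>real p ^ i * \<alpha>\<rceil> - 1" for i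
  have cb: "of_int (c i) < real p ^ i * \<alpha>" "real p ^ i * \<alpha> \<le> of_int (c i) + 1" for i
    unfolding c_def using ceiling_correct[of "real p ^ i * \<alpha>"] by auto
  have c0: "c 0 = 0"
  proof -
    have "of_int (c 0) < (1::real)" "0 < of_int (c 0) + (1::real)" using cb[of 0] a0 a1 by auto
    then show ?thesis by linarith
  qed
  define dd where "dd i = c (Suc i) - int p * c i" for i
  have dd: "0 \<le> dd i \<and> dd i < int p" for i
  proof -
    have "real p * of_int (c i) < real p ^ Suc i * \<alpha>" using cb(1)[of i] p by simp
    then have "(of_int (int p * c i) :: real) < of_int (c (Suc i) + 1)" using cb(2)[of "Suc i"] by (simp; linarith)
    then have 1: "int p * c i < c (Suc i) + 1" by (simp only: of_int_less_iff)
    have "real p ^ Suc i * \<alpha> \<le> real p * (of_int (c i) + 1)" using cb(2)[of i] p by simp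
    then have "(of_int (c (Suc i)) :: real) < of_int (int p * c i + int p)" using cb(1)[of "Suc i"]
      by (simp add: algebra_simps; linarith)
    then have 2: "c (Suc i) < int p * c i + int p" by (simp only: of_int_less_iff)
    show ?thesis using 1 2 unfolding dd_def by simp
  qed
  define a where "a e = (if e = 0 then 0 else nat (dd (e - 1)))" for e
  define g where "g i = real (a (Suc i)) / real p ^ Suc i" for i
  have ga: "real (a (Suc i)) = of_int (dd i)" for i unfolding a_def using dd[of i] by simp
  have P: "(\<Sum>i<k. g i) = of_int (c k) / real p ^ k" for k
  proof (induction k)
    case 0 then show ?case by (simp add: c0)
  next
    case (Suc k)
    have "(\<Sum>i<Suc k. g i) = of_int (c k) / real p ^ k + of_int (dd k) / real p ^ Suc k"
      using Suc by (simp add: g_def ga)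
    also have "\<dots> = of_int (c (Suc k)) / real p ^ Suc k"
      unfolding dd_def using p by (simp add: field_simps)
    finally show ?case .
  qed
  have pk: "real p ^ k > 0" for k using p by simp
  have lo: "\<alpha> - (1 / real p) ^ k \<le> (\<Sum>i<k. g i)" for k
  proof -
    have "real p ^ k * \<alpha> - 1 \<le> of_int (c k)" using cb(2)[of k] by simp
    then have "(real p ^ k * \<alpha> - 1) / real p ^ k \<le> of_int (c k) / real p ^ k"
      using pk[of k] by (intro divide_right_mono) auto
    then show ?thesis using pk[of k] p by (simp add: P power_one_over diff_divide_distrib)
  qed
  have hi: "(\<Sum>i<k. g i) < \<alpha>" for k
  proof -
    have "of_int (c k) / real p ^ k < real p ^ k * \<alpha> / real p ^ k"
      using cb(1)[of k] pk[of k] by (intro divide_strict_right_mono) auto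
    then show ?thesis using pk[of k] p by (simp add: P)
  qed
  have lim0: "(\<lambda>k. (1 / real p) ^ k) \<longlonglongrightarrow> 0" using p by (intro LIMSEQ_power_zero) auto
  have "(\<lambda>k. \<Sum>i<k. g i) \<longlonglongrightarrow> \<alpha>"
  proof (rule real_tendsto_sandwich[where f="\<lambda>k. \<alpha> - (1 / real p) ^ k" and h="\<lambda>k. \<alpha>"])
    show "\<forall>\<^sub>F k in sequentially. \<alpha> - (1 / real p) ^ k \<le> (\<Sum>i<k. g i)" using lo by simp
    show "\<forall>\<^sub>F k in sequentially. (\<Sum>i<k. g i) \<le> \<alpha>" using hi by (simp add: less_imp_le)
    show "(\<lambda>k. \<alpha> - (1 / real p) ^ k) \<longlonglongrightarrow> \<alpha>" using tendsto_diff[OF tendsto_const lim0] by simp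
  qed simp
  then have sm: "g sums \<alpha>" unfolding sums_def .
  have dig: "\<forall>e\<ge>1. a e < p"
  proof (intro allI impI)
    fix e :: nat assume "e \<ge> 1"
    then show "a e < p" unfolding a_def using dd[of "e - 1"] by (simp add: nat_less_iff)
  qed
  have nt: "\<forall>N. \<exists>e>N. a e \<noteq> 0"
  proof (rule ccontr)
    assume "\<not> (\<forall>N. \<exists>e>N. a e \<noteq> 0)"
    then obtain N where N: "\<And>e. e > N \<Longrightarrow> a e = 0" by auto
    have "(\<lambda>i. g (i + N)) sums (\<alpha> - (\<Sum>i<N. g i))" by (rule sums_split_initial_segment[OF sm])
    moreover have "(\<lambda>i. g (i + N)) = (\<lambda>i. 0)" using N by (auto simp: g_def)
    ultimately have "\<alpha> - (\<Sum>i<N. g i) = 0" using sums_zero sums_unique2 by metis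
    then show False using hi[of N] by simp
  qed
  show ?thesis unfolding nonterm_expansion_def using dig nt sm unfolding g_def by blast
qed

lemma trunc_bounds:
  assumes a0: "0 < \<alpha>" and a1: "\<alpha> \<le> 1" and p: "p \<ge> 2"
  shows "real (trunc_num p \<alpha> k) < real p ^ k * \<alpha>"
    and "real p ^ k * \<alpha> \<le> real (trunc_num p \<alpha> k) + 1"
proof -
  define a where "a = (SOME a. nonterm_expansion p \<alpha> a)"
  have E: "nonterm_expansion p \<alpha> a" unfolding a_def
    using expansion_exists[OF a0 a1 p] by (rule someI_ex)
  have tn: "trunc_num p \<alpha> k = (\<Sum>i\<in>{1..k}. a i * p^(k-i))"
    unfolding trunc_num_def a_def using a0 by (simp add: Let_def)
  have T: "real (trunc_num p \<alpha> k) = real p^k * (\<Sum>i<k. real (a (Suc i)) / real p ^ Suc i)"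
    unfolding tn by (rule digits_sum) (use p in simp)
  show "real (trunc_num p \<alpha> k) < real p ^ k * \<alpha>"
    using expansion_bounds(1)[OF E p, of k] T by simp
  show "real p ^ k * \<alpha> \<le> real (trunc_num p \<alpha> k) + 1"
    using expansion_bounds(2)[OF E p, of k] T by simp
qed

lemma trunc_eq:
  assumes a0: "0 < \<alpha>" and a1: "\<alpha> \<le> 1" and p: "p \<ge> 2"
    and K: "(real p ^ k - 1) * \<alpha> = real K"
  shows "trunc_num p \<alpha> k = K"
proof -
  have e: "real p ^ k * \<alpha> = real K + \<alpha>" using K by (simp add: algebra_simps)
  have "real (trunc_num p \<alpha> k) < real K + 1" using trunc_bounds(1)[OF a0 a1 p, of k] e a1 by simp
  moreover have "real K < real (trunc_num p \<alpha> k) + 1" using trunc_bounds(2)[OF a0 a1 p, of k] e a0 by simp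
  ultimately show ?thesis by linarith
qed

theorem mainTheorem8:
  fixes f :: "'a::comm_ring_1" and p d :: nat and \<alpha> :: real
  assumes "prime p"
    and "CHAR('a) = p"
    and "F_pure p TYPE('a)"
    and "f \<noteq> 0" and "\<not> f dvd 1"
    and "d \<ge> 1"
    and "0 \<le> \<alpha>" and "\<alpha> \<le> 1"
    and "\<exists>n::nat. (real p ^ d - 1) * \<alpha> = real n"
    and "root_splits p d (f ^ trunc_num p \<alpha> d)"
  shows "\<forall>e::nat. e \<ge> 1 \<longrightarrow> root_splits p (e * d) (f ^ trunc_num p \<alpha> (e * d))"
proof -
  have p: "p \<ge> 2" using assms(1) by (simp add: prime_ge_2_nat)
  obtain n :: nat where n: "(real p ^ d - 1) * \<alpha> = real n" using assms(9) by blast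
  define K where "K e = n * (\<Sum>j<e. (p ^ d) ^ j)" for e
  have KS: "K (Suc e) = n + p ^ d * K e" for e
    unfolding K_def by (simp add: sum.lessThan_Suc_shift sum_distrib_left mult.assoc mult.left_commute del: sum.lessThan_Suc)
  have tK: "trunc_num p \<alpha> (e * d) = K e" for e
  proof (cases "\<alpha> = 0")
    case True
    have "n = 0" using n True by simp
    then show ?thesis using True unfolding K_def trunc_num_def by simp
  next
    case False
    then have a0: "0 < \<alpha>" using assms(7) by simp
    have "(real p ^ (e * d) - 1) * \<alpha> = ((real p ^ d) ^ e - 1) * \<alpha>"
      by (simp add: power_mult mult.commute)
    also have "\<dots> = (real p ^ d - 1) * \<alpha> * (\<Sum>j<e. (real p ^ d) ^ j)"
      by (simp add: power_diff_1_eq)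
    also have "\<dots> = real (K e)" unfolding K_def using n by simp
    finally show ?thesis by (rule trunc_eq[OF a0 assms(8) p])
  qed
  have base: "root_splits p d (f ^ n)"
    using assms(10) tK[of 1] unfolding K_def by simp
  have "root_splits p (Suc e * d) (f ^ K (Suc e))" for e
  proof (induction e)
    case 0 then show ?case using base unfolding K_def by simp
  next
    case (Suc e)
    have "root_splits p (d + Suc e * d) (f ^ n * (f ^ K (Suc e)) ^ (p ^ d))"
      by (rule compose_split[OF base Suc])
    moreover have "f ^ n * (f ^ K (Suc e)) ^ (p ^ d) = f ^ K (Suc (Suc e))"
      by (simp add: KS[of "Suc e"] power_add power_mult[symmetric] mult.commute)
    ultimately show ?case by (simp add: add.commute)
  qed
  then show ?thesis using tK by (metis Suc_le_D One_nat_def)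
qed

end
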